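(* Let $h:\mathbb{R}\to\mathbb{R}$ be of class $C^1$, let $x_0\in\mathbb{R}$, and let $\Phi$ be a real function of class $C^2$ on an interval $]x_-,x_+[$ with $x_-<x_0<x_+$, such that $h(x)\neq\Phi^2(x)$ for all $x\in]x_-,x_+[$. Define on $]x_-,x_+[$ \[ u_{\mathtt{top}}(x)=\exp\left[\int_{x_0}^{x}d\xi\,\Phi(\xi)\frac{\Phi'(\xi)-\sqrt{\left[h(\xi)-\Phi^{2}(\xi)\right]^{2}+\left[\Phi'(\xi)\right]^{2}}}{h(\xi)-\Phi^{2}(\xi)}\right], \] \[ u_{\mathtt{bot}}(x)=\exp\left[\int_{x_0}^{x}d\xi\,\Phi(\xi)\frac{\Phi'(\xi)+\sqrt{\left[h(\xi)-\Phi^{2}(\xi)\right]^{2}+\left[\Phi'(\xi)\right]^{2}}}{h(\xi)-\Phi^{2}(\xi)}\right]. \] Then $u(x)=A\,u_{\mathtt{top}}(x)+B\,u_{\mathtt{bot}}(x)$, with $A,B$ arbitrary constants, is the general solution of $u''(x)+h(x)u(x)=0$ on $]x_-,x_+[$ if and only if $\Phi$ satisfies on $]x_-,x_+[$ the equation \[ \Phi''(x)=\frac{3\Phi^{2}(x)+h(x)}{\Phi^{2}(x)-h(x)}\frac{\left[\Phi'(x)\right]^{2}}{\Phi(x)}-\frac{h'(x)\Phi'(x)}{\Phi^{2}(x)-h(x)}+\frac{\Phi^{4}(x)-h^{2}(x)}{\Phi(x)}. \]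
   Context: The equation for $\Phi$ is the equation satisfied by geodesic curves, written in explicit form $\varPhi=\Phi(x)$, of the Riemannian metric $g_h=\left[(h(x)-\varPhi^2)^2dx^2+d\varPhi^2\right]/\varPhi^2$ on $\{(x,\varPhi)\mid\varPhi>0,\ \varPhi^2\neq h(x)\}$, a metric of constant curvature $-1$. *)

theory Defs
  imports "HOL-Analysis.Analysis"
begin

definition oint :: "(real \<Rightarrow> real) \<Rightarrow> real \<Rightarrow> real \<Rightarrow> real" where
  "oint f a b = (if a \<le> b then integral {a..b} f else - integral {b..a} f)"

definition solves_ode :: "(real \<Rightarrow> real) \<Rightarrow> real \<Rightarrow> real \<Rightarrow> (real \<Rightarrow> real) \<Rightarrow> bool" where
  "solves_ode h a b u \<longleftrightarrow>
     (\<forall>x\<in>{a<..<b}. u differentiable (at x) \<and>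
        ((deriv u) has_real_derivative (- h x * u x)) (at x))"

definition general_solution :: "(real \<Rightarrow> real) \<Rightarrow> real \<Rightarrow> real \<Rightarrow> (real \<Rightarrow> real) \<Rightarrow> (real \<Rightarrow> real) \<Rightarrow> bool" where
  "general_solution h a b u1 u2 \<longleftrightarrow>
     (\<forall>A B. solves_ode h a b (\<lambda>x. A * u1 x + B * u2 x)) \<and>
     (\<forall>u. solves_ode h a b u \<longrightarrow> (\<exists>A B. \<forall>x\<in>{a<..<b}. u x = A * u1 x + B * u2 x))"

end

theory Submission
  imports Defs
begin

lemma alg0:
  fixes p q r hh dh sr ep G :: real
  assumes ep: "ep = 1 \<or> ep = -1" and g: "G \<noteq> 0" and p: "p \<noteq> 0" and sr: "sr > 0"
    and ss: "sr^2 = G^2 + q^2" and hh: "hh = G + p^2"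
  shows "((q * (q + ep * sr) + p * (r + ep * ((G * (dh - 2 * p * q) + q * r) / sr))) * G - p * (q + ep * sr) * (dh - 2 * p * q)) / G^2
     + (p * (q + ep * sr) / G)^2 + hh
     = ep * p * (q + ep * sr) / (sr * G) * (r - ((3 * p^2 + hh) / (- G) * q^2 / p
              - dh * q / (- G) + (p^4 - hh^2) / p))"
proof -
  have "sr \<noteq> 0" using sr by simp
  from ep show ?thesis
  proof
    assume "ep = 1"
    then show ?thesis using g p \<open>sr \<noteq> 0\<close> ss hh
      apply (simp add: field_simps)
      apply algebra
      done
  next
    assume "ep = -1"
    then show ?thesis using g p \<open>sr \<noteq> 0\<close> ss hh
      apply (simp add: field_simps)
      apply algebra
      done
  qed
qed

lemma alg1:
  fixes p q r hh dh ep :: real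
  assumes ep: "ep = 1 \<or> ep = -1" and g: "hh - p^2 \<noteq> 0" and p: "p \<noteq> 0"
  defines "sr \<equiv> sqrt ((hh - p^2)^2 + q^2)"
  shows "((q * (q + ep * sr) + p * (r + ep * (((hh - p^2) * (dh - 2 * p * q) + q * r) / sr))) * (hh - p^2)
       - p * (q + ep * sr) * (dh - 2 * p * q)) / (hh - p^2)^2
     + (p * (q + ep * sr) / (hh - p^2))^2 + hh = 0
     \<longleftrightarrow> r = (3 * p^2 + hh) / (p^2 - hh) * q^2 / p - dh * q / (p^2 - hh) + (p^4 - hh^2) / p"
proof -
  have pos: "(hh - p^2)^2 + q^2 > 0" using g by (simp add: add_pos_nonneg)
  have sr: "sr > 0" unfolding sr_def using pos by simp
  have ss: "sr^2 = (hh - p^2)^2 + q^2" unfolding sr_def using pos by simp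
  have e: "- (hh - p^2) = p^2 - hh" by simp
  have hheq: "hh = (hh - p^2) + p^2" by simp
  note A = alg0[OF ep g p sr ss hheq, of r dh, unfolded e]
  have nz: "q + ep * sr \<noteq> 0"
  proof
    assume "q + ep * sr = 0"
    then have "q = - (ep * sr)" by linarith
    then have "q^2 = ep^2 * sr^2" by (simp add: power_mult_distrib)
    moreover have "ep^2 = 1" using ep by auto
    ultimately have "q^2 = sr^2" by simp
    then show False using ss g by simp
  qed
  have a: "ep * p * (q + ep * sr) / (sr * (hh - p^2)) \<noteq> 0" using nz sr g p ep by auto
  show ?thesis unfolding A using a by simp
qed

lemma fe_deriv:
  fixes P dP h :: "real \<Rightarrow> real" and ep r dh x :: real
  assumes dP: "(P has_real_derivative dP x) (at x)" and ddP: "(dP has_real_derivative r) (at x)"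
    and dh: "(h has_real_derivative dh) (at x)" and g: "h x - (P x)^2 \<noteq> 0"
  shows "((\<lambda>\<xi>. P \<xi> * (dP \<xi> + ep * sqrt ((h \<xi> - (P \<xi>)^2)^2 + (dP \<xi>)^2)) / (h \<xi> - (P \<xi>)^2))
     has_real_derivative
     (((dP x) * ((dP x) + ep * sqrt ((h x - (P x)^2)^2 + (dP x)^2)) + P x * (r + ep * (((h x - (P x)^2) * (dh - 2 * P x * dP x) + dP x * r) / sqrt ((h x - (P x)^2)^2 + (dP x)^2)))) * (h x - (P x)^2)
       - P x * (dP x + ep * sqrt ((h x - (P x)^2)^2 + (dP x)^2)) * (dh - 2 * P x * dP x)) / (h x - (P x)^2)^2) (at x)"
proof -
  define G where "G = h x - (P x)^2"
  define S where "S = sqrt ((h x - (P x)^2)^2 + (dP x)^2)"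
  have pos: "(h x - (P x)^2)^2 + (dP x)^2 > 0" using g by (simp add: add_pos_nonneg)
  have sq: "S > 0" using pos S_def by simp
  have d1: "((\<lambda>\<xi>. h \<xi> - (P \<xi>)^2) has_real_derivative (dh - 2 * P x * dP x)) (at x)"
    by (rule DERIV_cong[OF DERIV_diff[OF dh DERIV_power[OF dP, of 2]]]) (simp add: algebra_simps)
  have d2: "((\<lambda>\<xi>. (h \<xi> - (P \<xi>)^2)^2 + (dP \<xi>)^2) has_real_derivative
       (2 * G * (dh - 2 * P x * dP x) + 2 * dP x * r)) (at x)"
    by (rule DERIV_cong[OF DERIV_add[OF DERIV_power[OF d1, of 2] DERIV_power[OF ddP, of 2]]]) (simp add: G_def algebra_simps)
  have d3: "((\<lambda>\<xi>. sqrt ((h \<xi> - (P \<xi>)^2)^2 + (dP \<xi>)^2)) has_real_derivative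
       (inverse S / 2 * (2 * G * (dh - 2 * P x * dP x) + 2 * dP x * r))) (at x)"
    by (rule DERIV_cong[OF DERIV_chain2[OF DERIV_real_sqrt[OF pos] d2]]) (simp add: S_def)
  have d4: "((\<lambda>\<xi>. P \<xi> * (dP \<xi> + ep * sqrt ((h \<xi> - (P \<xi>)^2)^2 + (dP \<xi>)^2))) has_real_derivative
       (dP x * (dP x + ep * S) + P x * (r + ep * (inverse S / 2 * (2 * G * (dh - 2 * P x * dP x) + 2 * dP x * r))))) (at x)"
    by (rule DERIV_cong[OF DERIV_mult[OF dP DERIV_add[OF ddP DERIV_cmult[OF d3, of ep]]]]) (simp add: S_def)
  note d5 = DERIV_divide[OF d4 d1 g]
  have gG: "G \<noteq> 0" using g G_def by simp
  show ?thesis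
    apply (rule DERIV_cong[OF d5])
    unfolding S_def[symmetric] unfolding G_def[symmetric]
    using gG sq apply (simp add: field_simps) by algebra
qed

lemma oint_deriv:
  fixes f :: "real \<Rightarrow> real"
  assumes cont: "continuous_on {a<..<b} f" and x0: "x0 \<in> {a<..<b}" and x: "x \<in> {a<..<b}"
  shows "((\<lambda>y. oint f x0 y) has_real_derivative f x) (at x)"
proof -
  define lo where "lo = (a + min x x0) / 2"
  define hi where "hi = (b + max x x0) / 2"
  have lo: "a < lo" "lo < x" "lo < x0" using x x0 unfolding lo_def by auto
  have hi: "hi < b" "x < hi" "x0 < hi" using x x0 unfolding hi_def by auto
  have sub: "{lo..hi} \<subseteq> {a<..<b}" using lo hi by auto
  have c: "continuous_on {lo..hi} f" using continuous_on_subset[OF cont sub] .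
  have int: "f integrable_on {lo..hi}" using integrable_continuous_real[OF c] .
  have eq: "oint f x0 y = integral {lo..y} f - integral {lo..x0} f" if y: "y \<in> {lo<..<hi}" for y
  proof (cases "x0 \<le> y")
    case True
    have i: "f integrable_on {lo..y}" using integrable_on_subinterval[OF int] y by auto
    have "integral {lo..x0} f + integral {x0..y} f = integral {lo..y} f"
      using Henstock_Kurzweil_Integration.integral_combine[OF _ True i] lo by auto
    then show ?thesis using True unfolding oint_def by simp
  next
    case False
    have i: "f integrable_on {lo..x0}" using integrable_on_subinterval[OF int] hi by auto
    have "integral {lo..y} f + integral {y..x0} f = integral {lo..x0} f"
      using Henstock_Kurzweil_Integration.integral_combine[OF _ _ i] y False by auto
    then show ?thesis using False unfolding oint_def by simp
  qed
  have d0: "((\<lambda>y. integral {lo..y} f) has_real_derivative f x) (at x)"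
    using integral_has_real_derivative[OF c, of x] lo hi at_within_Icc_at[of lo x hi] by auto
  have d1: "((\<lambda>y. integral {lo..y} f - integral {lo..x0} f) has_real_derivative f x) (at x)"
    using DERIV_diff[OF d0 DERIV_const[of "integral {lo..x0} f" "at x"]] by simp
  show ?thesis
    by (rule has_field_derivative_transform_within_open[OF d1, of "{lo<..<hi}"])
       (use lo hi eq in auto)
qed

lemma solves_lin:
  assumes s1: "solves_ode h a b u1" and s2: "solves_ode h a b u2"
  shows "solves_ode h a b (\<lambda>x. A * u1 x + B * u2 x)"
  unfolding solves_ode_def
proof
  fix x assume x: "x \<in> {a<..<b}"
  have D1: "(u1 has_real_derivative deriv u1 y) (at y)" if "y \<in> {a<..<b}" for y
    using s1 that unfolding solves_ode_def DERIV_deriv_iff_real_differentiable[symmetric] by blast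
  have D2: "(u2 has_real_derivative deriv u2 y) (at y)" if "y \<in> {a<..<b}" for y
    using s2 that unfolding solves_ode_def DERIV_deriv_iff_real_differentiable[symmetric] by blast
  have DD: "((\<lambda>x. A * u1 x + B * u2 x) has_real_derivative A * deriv u1 y + B * deriv u2 y) (at y)"
    if "y \<in> {a<..<b}" for y
    using DERIV_add[OF DERIV_cmult[OF D1[OF that], of A] DERIV_cmult[OF D2[OF that], of B]] .
  have dd: "deriv (\<lambda>x. A * u1 x + B * u2 x) y = A * deriv u1 y + B * deriv u2 y"
    if "y \<in> {a<..<b}" for y
    using DERIV_imp_deriv[OF DD[OF that]] .
  have E1: "(deriv u1 has_real_derivative (- h x * u1 x)) (at x)" using s1 x unfolding solves_ode_def by blast
  have E2: "(deriv u2 has_real_derivative (- h x * u2 x)) (at x)" using s2 x unfolding solves_ode_def by blast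
  have E: "((\<lambda>y. A * deriv u1 y + B * deriv u2 y) has_real_derivative
      - h x * (A * u1 x + B * u2 x)) (at x)"
    by (rule DERIV_cong[OF DERIV_add[OF DERIV_cmult[OF E1, of A] DERIV_cmult[OF E2, of B]]])
       (simp add: algebra_simps)
  have "(deriv (\<lambda>x. A * u1 x + B * u2 x) has_real_derivative
      - h x * (A * u1 x + B * u2 x)) (at x)"
    by (rule has_field_derivative_transform_within_open[OF E, of "{a<..<b}"]) (use x dd in auto)
  moreover have "(\<lambda>x. A * u1 x + B * u2 x) differentiable (at x)"
    using DD[OF x] real_differentiable_def by blast
  ultimately show "(\<lambda>x. A * u1 x + B * u2 x) differentiable (at x) \<and>
      (deriv (\<lambda>x. A * u1 x + B * u2 x) has_real_derivative - h x * (A * u1 x + B * u2 x)) (at x)"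
    by simp
qed

lemma solves_span:
  assumes s1: "solves_ode h a b u1" and s2: "solves_ode h a b u2" and s: "solves_ode h a b u"
    and W: "\<forall>x\<in>{a<..<b}. u1 x * deriv u2 x - deriv u1 x * u2 x \<noteq> 0"
  shows "\<exists>A B. \<forall>x\<in>{a<..<b}. u x = A * u1 x + B * u2 x"
proof (cases "a < b")
  case False
  then show ?thesis by auto
next
  case True
  define x1 where "x1 = (a + b) / 2"
  have x1: "x1 \<in> {a<..<b}" using True x1_def by auto
  have D: "(v has_real_derivative deriv v y) (at y)" "(deriv v has_real_derivative (- h y * v y)) (at y)"
    if "solves_ode h a b v" "y \<in> {a<..<b}" for v y
    using that unfolding solves_ode_def DERIV_deriv_iff_real_differentiable[symmetric] by blast+
  have const: "\<exists>c. \<forall>x\<in>{a<..<b}. v x * deriv w x - deriv v x * w x = c"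
    if sv: "solves_ode h a b v" and sw: "solves_ode h a b w" for v w
  proof (rule has_field_derivative_zero_constant)
    show "convex {a<..<b}" by (rule convex_real_interval)
    fix x assume x: "x \<in> {a<..<b}"
    have "((\<lambda>x. v x * deriv w x - deriv v x * w x) has_real_derivative 0) (at x)"
      by (rule DERIV_cong[OF DERIV_diff[OF DERIV_mult[OF D(1)[OF sv x] D(2)[OF sw x]]
          DERIV_mult[OF D(2)[OF sv x] D(1)[OF sw x]]]]) (simp add: algebra_simps)
    then show "((\<lambda>x. v x * deriv w x - deriv v x * w x) has_real_derivative 0) (at x within {a<..<b})"
      by (rule has_field_derivative_at_within)
  qed
  obtain c1 where c1: "\<forall>x\<in>{a<..<b}. u x * deriv u2 x - deriv u x * u2 x = c1" using const[OF s s2] by blast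
  obtain c2 where c2: "\<forall>x\<in>{a<..<b}. u1 x * deriv u x - deriv u1 x * u x = c2" using const[OF s1 s] by blast
  obtain cw where cw: "\<forall>x\<in>{a<..<b}. u1 x * deriv u2 x - deriv u1 x * u2 x = cw" using const[OF s1 s2] by blast
  have cw0: "cw \<noteq> 0" using W cw x1 by auto
  show ?thesis
  proof (intro exI ballI)
    fix x assume x: "x \<in> {a<..<b}"
    have e1: "u x * deriv u2 x - deriv u x * u2 x = c1" using c1 x by blast
    have e2: "u1 x * deriv u x - deriv u1 x * u x = c2" using c2 x by blast
    have ew: "u1 x * deriv u2 x - deriv u1 x * u2 x = cw" using cw x by blast
    have "u x * cw = c1 * u1 x + c2 * u2 x"
      unfolding e1[symmetric] e2[symmetric] ew[symmetric] by (simp add: algebra_simps)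
    then show "u x = c1 / cw * u1 x + c2 / cw * u2 x" using cw0 by (simp add: field_simps)
  qed
qed


definition fe :: "(real \<Rightarrow> real) \<Rightarrow> (real \<Rightarrow> real) \<Rightarrow> real \<Rightarrow> real \<Rightarrow> real" where
  "fe h \<Phi> ep \<xi> = \<Phi> \<xi> * (deriv \<Phi> \<xi> + ep * sqrt ((h \<xi> - (\<Phi> \<xi>)^2)^2 + (deriv \<Phi> \<xi>)^2)) / (h \<xi> - (\<Phi> \<xi>)^2)"

definition Frhs :: "(real \<Rightarrow> real) \<Rightarrow> (real \<Rightarrow> real) \<Rightarrow> real \<Rightarrow> real" where
  "Frhs h \<Phi> x = (3 * (\<Phi> x)\<^sup>2 + h x) / ((\<Phi> x)\<^sup>2 - h x) * (deriv \<Phi> x)\<^sup>2 / \<Phi> x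
              - deriv h x * deriv \<Phi> x / ((\<Phi> x)\<^sup>2 - h x)
              + ((\<Phi> x)^4 - (h x)\<^sup>2) / \<Phi> x"

lemma key:
  fixes h \<Phi> :: "real \<Rightarrow> real" and x0 xm xp ep :: real
  assumes dP: "\<And>x. x \<in> {xm<..<xp} \<Longrightarrow> (\<Phi> has_real_derivative deriv \<Phi> x) (at x)"
    and ddP: "\<And>x. x \<in> {xm<..<xp} \<Longrightarrow> (deriv \<Phi> has_real_derivative deriv (deriv \<Phi>) x) (at x)"
    and dh: "\<And>x. (h has_real_derivative deriv h x) (at x)"
    and hP: "\<And>x. x \<in> {xm<..<xp} \<Longrightarrow> h x - (\<Phi> x)^2 \<noteq> 0"
    and nz: "\<And>x. x \<in> {xm<..<xp} \<Longrightarrow> \<Phi> x \<noteq> 0"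
    and x0: "x0 \<in> {xm<..<xp}" and ep: "ep = 1 \<or> ep = -1"
  shows "(\<forall>x\<in>{xm<..<xp}. deriv (\<lambda>y. exp (oint (fe h \<Phi> ep) x0 y)) x
            = fe h \<Phi> ep x * exp (oint (fe h \<Phi> ep) x0 x))
     \<and> (solves_ode h xm xp (\<lambda>y. exp (oint (fe h \<Phi> ep) x0 y))
        \<longleftrightarrow> (\<forall>x\<in>{xm<..<xp}. deriv (deriv \<Phi>) x = Frhs h \<Phi> x))"
proof -
  define I where "I = {xm<..<xp}"
  define f where "f = fe h \<Phi> ep"
  define U where "U = (\<lambda>y. exp (oint f x0 y))"
  define D where "D x = (((deriv \<Phi> x) * ((deriv \<Phi> x) + ep * sqrt ((h x - (\<Phi> x)^2)^2 + (deriv \<Phi> x)^2))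
     + \<Phi> x * (deriv (deriv \<Phi>) x + ep * (((h x - (\<Phi> x)^2) * (deriv h x - 2 * \<Phi> x * deriv \<Phi> x)
     + deriv \<Phi> x * deriv (deriv \<Phi>) x) / sqrt ((h x - (\<Phi> x)^2)^2 + (deriv \<Phi> x)^2)))) * (h x - (\<Phi> x)^2)
       - \<Phi> x * (deriv \<Phi> x + ep * sqrt ((h x - (\<Phi> x)^2)^2 + (deriv \<Phi> x)^2)) * (deriv h x - 2 * \<Phi> x * deriv \<Phi> x))
       / (h x - (\<Phi> x)^2)^2" for x
  have fd: "(f has_real_derivative D x) (at x)" if x: "x \<in> I" for x
    unfolding f_def fe_def[abs_def] D_def
    by (rule fe_deriv[OF dP ddP dh hP]) (use x I_def in auto)
  have fc: "continuous_on I f"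
    by (rule continuous_at_imp_continuous_on) (use fd DERIV_isCont in blast)
  have Ud: "(U has_real_derivative f x * U x) (at x)" if x: "x \<in> I" for x
    unfolding U_def
    by (rule DERIV_cong[OF DERIV_chain2[OF DERIV_exp oint_deriv[OF fc[unfolded I_def] x0 x[unfolded I_def]]]])
       simp
  have dU: "deriv U x = f x * U x" if x: "x \<in> I" for x
    using DERIV_imp_deriv[OF Ud[OF x]] .
  have Udd: "(deriv U has_real_derivative (D x + (f x)^2) * U x) (at x)" if x: "x \<in> I" for x
  proof -
    have "((\<lambda>y. f y * U y) has_real_derivative (D x + (f x)^2) * U x) (at x)"
      by (rule DERIV_cong[OF DERIV_mult[OF fd[OF x] Ud[OF x]]]) (simp add: algebra_simps power2_eq_square)
    then show ?thesis
      by (rule has_field_derivative_transform_within_open[of _ _ _ I]) (use x dU I_def in auto)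
  qed
  have Upos: "U x > 0" for x unfolding U_def by simp
  have iff: "(deriv U has_real_derivative - h x * U x) (at x) \<longleftrightarrow> D x + (f x)^2 + h x = 0"
    if x: "x \<in> I" for x
  proof
    assume "(deriv U has_real_derivative - h x * U x) (at x)"
    from DERIV_unique[OF Udd[OF x] this] have "(D x + (f x)^2) * U x = - h x * U x" .
    then have "(D x + (f x)^2 + h x) * U x = 0" by (simp add: algebra_simps)
    then show "D x + (f x)^2 + h x = 0" using Upos[of x] by simp
  next
    assume "D x + (f x)^2 + h x = 0"
    then have "D x + (f x)^2 = - h x" by linarith
    then have "(D x + (f x)^2) * U x = - h x * U x" by simp
    then show "(deriv U has_real_derivative - h x * U x) (at x)" using Udd[OF x] by simp
  qed
  have alg: "D x + (f x)^2 + h x = 0 \<longleftrightarrow> deriv (deriv \<Phi>) x = Frhs h \<Phi> x" if x: "x \<in> I" for x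
    unfolding D_def f_def fe_def Frhs_def
    by (rule alg1[OF ep hP nz]) (use x I_def in auto)
  have S: "solves_ode h xm xp U \<longleftrightarrow> (\<forall>x\<in>I. D x + (f x)^2 + h x = 0)"
  proof
    assume s: "solves_ode h xm xp U"
    show "\<forall>x\<in>I. D x + (f x)^2 + h x = 0"
    proof
      fix x assume x: "x \<in> I"
      then have "(deriv U has_real_derivative - h x * U x) (at x)"
        using s unfolding solves_ode_def I_def by blast
      then show "D x + (f x)^2 + h x = 0" using iff[OF x] by blast
    qed
  next
    assume a: "\<forall>x\<in>I. D x + (f x)^2 + h x = 0"
    show "solves_ode h xm xp U"
      unfolding solves_ode_def
    proof
      fix x assume x0: "x \<in> {xm<..<xp}"
      then have x: "x \<in> I" unfolding I_def .
      have "U differentiable (at x)" using Ud[OF x] real_differentiable_def by blast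
      moreover have "(deriv U has_real_derivative - h x * U x) (at x)" using iff[OF x] a x by blast
      ultimately show "U differentiable (at x) \<and> (deriv U has_real_derivative - h x * U x) (at x)" by (rule conjI)
    qed
  qed
  have S2: "(\<forall>x\<in>I. D x + (f x)^2 + h x = 0) \<longleftrightarrow> (\<forall>x\<in>I. deriv (deriv \<Phi>) x = Frhs h \<Phi> x)"
    by (rule ball_cong[OF refl alg])
  have P1: "\<forall>x\<in>I. deriv U x = f x * U x" using dU by blast
  have P2: "solves_ode h xm xp U \<longleftrightarrow> (\<forall>x\<in>I. deriv (deriv \<Phi>) x = Frhs h \<Phi> x)"
    using S S2 by (rule trans)
  show ?thesis using P1 P2 unfolding U_def f_def I_def by (rule conjI)
qed

lemma C1_deriv:
  fixes f :: "real \<Rightarrow> real"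
  assumes "f C1_differentiable_on S" "x \<in> S"
  shows "(f has_real_derivative deriv f x) (at x)"
proof -
  obtain D where D: "\<forall>x\<in>S. (f has_vector_derivative D x) (at x)"
    using assms(1) unfolding C1_differentiable_on_def by blast
  then have "(f has_real_derivative D x) (at x)"
    using assms(2) has_real_derivative_iff_has_vector_derivative by blast
  then show ?thesis using DERIV_imp_deriv by metis
qed

theorem theorem2p10:
  fixes h \<Phi> :: "real \<Rightarrow> real" and x0 xm xp :: real
  assumes h_C1: "h C1_differentiable_on UNIV"
    and Phi_C2: "\<Phi> C1_differentiable_on {xm<..<xp}" "(deriv \<Phi>) C1_differentiable_on {xm<..<xp}"
    and x0: "xm < x0" "x0 < xp"
    and hPhi: "\<forall>x\<in>{xm<..<xp}. h x \<noteq> (\<Phi> x)\<^sup>2"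
    and Phi_nz: "\<forall>x\<in>{xm<..<xp}. \<Phi> x \<noteq> 0"
  shows "general_solution h xm xp
           (\<lambda>x. exp (oint (\<lambda>\<xi>. \<Phi> \<xi> * (deriv \<Phi> \<xi> - sqrt ((h \<xi> - (\<Phi> \<xi>)\<^sup>2)\<^sup>2 + (deriv \<Phi> \<xi>)\<^sup>2))
                                / (h \<xi> - (\<Phi> \<xi>)\<^sup>2)) x0 x))
           (\<lambda>x. exp (oint (\<lambda>\<xi>. \<Phi> \<xi> * (deriv \<Phi> \<xi> + sqrt ((h \<xi> - (\<Phi> \<xi>)\<^sup>2)\<^sup>2 + (deriv \<Phi> \<xi>)\<^sup>2))
                                / (h \<xi> - (\<Phi> \<xi>)\<^sup>2)) x0 x))
         \<longleftrightarrow>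
         (\<forall>x\<in>{xm<..<xp}.
            deriv (deriv \<Phi>) x =
              (3 * (\<Phi> x)\<^sup>2 + h x) / ((\<Phi> x)\<^sup>2 - h x) * (deriv \<Phi> x)\<^sup>2 / \<Phi> x
              - deriv h x * deriv \<Phi> x / ((\<Phi> x)\<^sup>2 - h x)
              + ((\<Phi> x)^4 - (h x)\<^sup>2) / \<Phi> x)"
proof -
  define I where "I = {xm<..<xp}"
  have dP: "\<And>x. x \<in> {xm<..<xp} \<Longrightarrow> (\<Phi> has_real_derivative deriv \<Phi> x) (at x)"
    using C1_deriv[OF Phi_C2(1)] by blast
  have ddP: "\<And>x. x \<in> {xm<..<xp} \<Longrightarrow> (deriv \<Phi> has_real_derivative deriv (deriv \<Phi>) x) (at x)"
    using C1_deriv[OF Phi_C2(2)] by blast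
  have dh: "\<And>x. (h has_real_derivative deriv h x) (at x)"
    using C1_deriv[OF h_C1] by blast
  have hP: "\<And>x. x \<in> {xm<..<xp} \<Longrightarrow> h x - (\<Phi> x)^2 \<noteq> 0" using hPhi by auto
  have nz: "\<And>x. x \<in> {xm<..<xp} \<Longrightarrow> \<Phi> x \<noteq> 0" using Phi_nz by auto
  have x0I: "x0 \<in> {xm<..<xp}" using x0 by auto
  define U1 where "U1 = (\<lambda>y. exp (oint (fe h \<Phi> (-1)) x0 y))"
  define U2 where "U2 = (\<lambda>y. exp (oint (fe h \<Phi> 1) x0 y))"
  have K1: "(\<forall>x\<in>{xm<..<xp}. deriv U1 x = fe h \<Phi> (-1) x * U1 x)
     \<and> (solves_ode h xm xp U1 \<longleftrightarrow> (\<forall>x\<in>{xm<..<xp}. deriv (deriv \<Phi>) x = Frhs h \<Phi> x))"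
    unfolding U1_def by (rule key) (use dP ddP dh hP nz x0I in auto)
  have K2: "(\<forall>x\<in>{xm<..<xp}. deriv U2 x = fe h \<Phi> 1 x * U2 x)
     \<and> (solves_ode h xm xp U2 \<longleftrightarrow> (\<forall>x\<in>{xm<..<xp}. deriv (deriv \<Phi>) x = Frhs h \<Phi> x))"
    unfolding U2_def by (rule key) (use dP ddP dh hP nz x0I in auto)
  have e1: "(\<lambda>\<xi>. \<Phi> \<xi> * (deriv \<Phi> \<xi> - sqrt ((h \<xi> - (\<Phi> \<xi>)\<^sup>2)\<^sup>2 + (deriv \<Phi> \<xi>)\<^sup>2))
                                / (h \<xi> - (\<Phi> \<xi>)\<^sup>2)) = fe h \<Phi> (-1)"
    by (rule ext) (simp add: fe_def)
  have e2: "(\<lambda>\<xi>. \<Phi> \<xi> * (deriv \<Phi> \<xi> + sqrt ((h \<xi> - (\<Phi> \<xi>)\<^sup>2)\<^sup>2 + (deriv \<Phi> \<xi>)\<^sup>2))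
                                / (h \<xi> - (\<Phi> \<xi>)\<^sup>2)) = fe h \<Phi> 1"
    by (rule ext) (simp add: fe_def)
  have main: "general_solution h xm xp U1 U2 \<longleftrightarrow> (\<forall>x\<in>{xm<..<xp}. deriv (deriv \<Phi>) x = Frhs h \<Phi> x)"
  proof
    assume "general_solution h xm xp U1 U2"
    then have "solves_ode h xm xp (\<lambda>x. 1 * U1 x + 0 * U2 x)" unfolding general_solution_def by blast
    then have "solves_ode h xm xp U1" by simp
    then show "\<forall>x\<in>{xm<..<xp}. deriv (deriv \<Phi>) x = Frhs h \<Phi> x"
      by (rule iffD1[OF conjunct2[OF K1]])
  next
    assume R: "\<forall>x\<in>{xm<..<xp}. deriv (deriv \<Phi>) x = Frhs h \<Phi> x"
    have s1: "solves_ode h xm xp U1" by (rule iffD2[OF conjunct2[OF K1] R])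
    have s2: "solves_ode h xm xp U2" by (rule iffD2[OF conjunct2[OF K2] R])
    have W: "\<forall>x\<in>{xm<..<xp}. U1 x * deriv U2 x - deriv U1 x * U2 x \<noteq> 0"
    proof
      fix x assume x: "x \<in> {xm<..<xp}"
      have G: "h x - (\<Phi> x)^2 \<noteq> 0" using hP[OF x] .
      have pos: "(h x - (\<Phi> x)^2)^2 + (deriv \<Phi> x)^2 > 0" using G by (simp add: add_pos_nonneg)
      have sq: "sqrt ((h x - (\<Phi> x)^2)^2 + (deriv \<Phi> x)^2) > 0" using pos by simp
      have df: "fe h \<Phi> 1 x - fe h \<Phi> (-1) x = 2 * \<Phi> x * sqrt ((h x - (\<Phi> x)^2)^2 + (deriv \<Phi> x)^2) / (h x - (\<Phi> x)^2)"
      proof -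
        define S where "S = sqrt ((h x - (\<Phi> x)^2)^2 + (deriv \<Phi> x)^2)"
        have "fe h \<Phi> 1 x - fe h \<Phi> (-1) x = (\<Phi> x * (deriv \<Phi> x + S) - \<Phi> x * (deriv \<Phi> x - S)) / (h x - (\<Phi> x)^2)"
          unfolding fe_def S_def[symmetric] by (simp add: diff_divide_distrib)
        also have "\<dots> = 2 * \<Phi> x * S / (h x - (\<Phi> x)^2)" by (simp add: algebra_simps)
        finally show ?thesis unfolding S_def .
      qed
      have dfnz: "fe h \<Phi> 1 x - fe h \<Phi> (-1) x \<noteq> 0" unfolding df using G sq nz[OF x] by simp
      have "U1 x * deriv U2 x - deriv U1 x * U2 x = U1 x * U2 x * (fe h \<Phi> 1 x - fe h \<Phi> (-1) x)"
      proof -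
        have d1: "deriv U1 x = fe h \<Phi> (-1) x * U1 x" using conjunct1[OF K1] x by blast
        have d2: "deriv U2 x = fe h \<Phi> 1 x * U2 x" using conjunct1[OF K2] x by blast
        show ?thesis unfolding d1 d2 by (simp add: algebra_simps)
      qed
      moreover have "U1 x > 0" "U2 x > 0" unfolding U1_def U2_def by simp_all
      ultimately show "U1 x * deriv U2 x - deriv U1 x * U2 x \<noteq> 0" using dfnz by simp
    qed
    show "general_solution h xm xp U1 U2"
      unfolding general_solution_def
    proof (intro conjI allI impI)
      fix A B show "solves_ode h xm xp (\<lambda>x. A * U1 x + B * U2 x)" by (rule solves_lin[OF s1 s2])
    next
      fix u assume "solves_ode h xm xp u"
      then show "\<exists>A B. \<forall>x\<in>{xm<..<xp}. u x = A * U1 x + B * U2 x" by (rule solves_span[OF s1 s2 _ W])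
    qed
  qed
  have A: "(\<lambda>x. exp (oint (\<lambda>\<xi>. \<Phi> \<xi> * (deriv \<Phi> \<xi> - sqrt ((h \<xi> - (\<Phi> \<xi>)\<^sup>2)\<^sup>2 + (deriv \<Phi> \<xi>)\<^sup>2))
                                / (h \<xi> - (\<Phi> \<xi>)\<^sup>2)) x0 x)) = U1"
    unfolding U1_def by (simp only: e1)
  have B: "(\<lambda>x. exp (oint (\<lambda>\<xi>. \<Phi> \<xi> * (deriv \<Phi> \<xi> + sqrt ((h \<xi> - (\<Phi> \<xi>)\<^sup>2)\<^sup>2 + (deriv \<Phi> \<xi>)\<^sup>2))
                                / (h \<xi> - (\<Phi> \<xi>)\<^sup>2)) x0 x)) = U2"
    unfolding U2_def by (simp only: e2)
  have C: "(\<forall>x\<in>{xm<..<xp}.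
            deriv (deriv \<Phi>) x =
              (3 * (\<Phi> x)\<^sup>2 + h x) / ((\<Phi> x)\<^sup>2 - h x) * (deriv \<Phi> x)\<^sup>2 / \<Phi> x
              - deriv h x * deriv \<Phi> x / ((\<Phi> x)\<^sup>2 - h x)
              + ((\<Phi> x)^4 - (h x)\<^sup>2) / \<Phi> x) \<longleftrightarrow> (\<forall>x\<in>{xm<..<xp}. deriv (deriv \<Phi>) x = Frhs h \<Phi> x)"
    by (simp only: Frhs_def)
  show ?thesis unfolding A B C by (rule main)
qed

end
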